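(* Let $[X,d,m]$ be a metric random walk space with a finite invariant measure $\nu$, and assume its Ollivier-Ricci curvature satisfies $\kappa_m>0$. Then $[X,d,m]$ with $\nu$ is $m$-connected and weakly strong $m$-connected.
   Context: A metric random walk space $[X,d,m]$ is a Polish metric space $(X,d)$ with a family $m=(m_x)_{x\in X}$ of Borel probability measures, $x\mapsto m_x(A)$ Borel measurable, each with finite first moment. A Radon measure $\nu$ is invariant if $\nu(A)=\int_X m_x(A)d\nu(x)$ for all $\nu$-measurable $A$. Iterates $m_x^{*1}=m_x$, $m_x^{*n}(A)=\int_X m_z(A)dm_x^{*(n-1)}(z)$; $N^m_D=\{x:m_x^{*n}(D)=0\ \forall n\in\mathbb N\}$. The space is $m$-connected if $\nu(N^m_D)=0$ for every $\nu$-measurable $D$ with $0<\nu(D)<\infty$. It is weakly strong $m$-connected if for every $0\le u_0\in L^2(X,\nu)\cap C(X)$ not $\nu$-a.e. zero, $e^{t\Delta_m}u_0(x)>0$ for all $x\in X$ and all $t>0$, where $e^{t\Delta_m}u_0(x)$ is understood pointwise as $e^{-t}\sum_{n\ge0}\frac{t^n}{n!}\int_X u_0\,dm_x^{*n}$ (with $m_x^{*0}=\delta_x$), $\Delta_m f(x)=\int_X(f(y)-f(x))dm_x(y)$. The $1$-Wasserstein distance between probability measures is $W_1^d(\mu,\mu')=\inf_{\gamma}\int_{X\times X} d(x,y)\,d\gamma(x,y)$ over couplings $\gamma$ of $\mu,\mu'$. The Ollivier-Ricci curvature is $\kappa_m=\inf_{x\ne y}\big(1-\frac{W_1^d(m_x,m_y)}{d(x,y)}\big)$.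 *)

theory Defs
  imports "HOL-Probability.Probability"
begin

definition metric_random_walk_space :: "('a::polish_space \<Rightarrow> 'a measure) \<Rightarrow> bool" where
  "metric_random_walk_space m \<longleftrightarrow>
     (\<forall>x. prob_space (m x) \<and> sets (m x) = sets borel) \<and>
     (\<forall>A\<in>sets borel. (\<lambda>x. emeasure (m x) A) \<in> borel_measurable borel) \<and>
     (\<forall>x. (\<integral>\<^sup>+ y. ennreal (dist x y) \<partial>m x) < \<infinity>)"

text \<open>Invariant (Borel, hence Radon when finite on a Polish space) measure.\<close>
definition invariant_measure :: "('a::polish_space \<Rightarrow> 'a measure) \<Rightarrow> 'a measure \<Rightarrow> bool" where
  "invariant_measure m \<nu> \<longleftrightarrow>
     sets \<nu> = sets borel \<and>
     (\<forall>A\<in>sets borel. emeasure \<nu> A = (\<integral>\<^sup>+ x. emeasure (m x) A \<partial>\<nu>))"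

primrec m_iter :: "('a::polish_space \<Rightarrow> 'a measure) \<Rightarrow> 'a \<Rightarrow> nat \<Rightarrow> 'a measure" where
  "m_iter m x 0 = return borel x"
| "m_iter m x (Suc n) = bind (m_iter m x n) m"

definition N_set :: "('a::polish_space \<Rightarrow> 'a measure) \<Rightarrow> 'a set \<Rightarrow> 'a set" where
  "N_set m D = {x. \<forall>n\<ge>1. emeasure (m_iter m x n) D = 0}"

definition m_connected :: "('a::polish_space \<Rightarrow> 'a measure) \<Rightarrow> 'a measure \<Rightarrow> bool" where
  "m_connected m \<nu> \<longleftrightarrow>
     (\<forall>D\<in>sets borel. 0 < emeasure \<nu> D \<and> emeasure \<nu> D < \<infinity> \<longrightarrow> emeasure \<nu> (N_set m D) = 0)"

text \<open>Pointwise heat semigroup e^{t Delta_m} u (x) for nonnegative u, with values in [0,\<infinity>].\<close>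
definition heat_pt :: "('a::polish_space \<Rightarrow> 'a measure) \<Rightarrow> ('a \<Rightarrow> real) \<Rightarrow> real \<Rightarrow> 'a \<Rightarrow> ennreal" where
  "heat_pt m u t x =
     ennreal (exp (- t)) * (\<Sum>n. ennreal (t ^ n / fact n) * (\<integral>\<^sup>+ y. ennreal (u y) \<partial>m_iter m x n))"

definition weakly_strong_m_connected :: "('a::polish_space \<Rightarrow> 'a measure) \<Rightarrow> 'a measure \<Rightarrow> bool" where
  "weakly_strong_m_connected m \<nu> \<longleftrightarrow>
     (\<forall>u. continuous_on UNIV u \<and> (\<forall>x. 0 \<le> u x) \<and> integrable \<nu> (\<lambda>x. (u x)\<^sup>2) \<and>
          \<not> (AE x in \<nu>. u x = 0)
          \<longrightarrow> (\<forall>x. \<forall>t>0. 0 < heat_pt m u t x))"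

definition couplings :: "'a::polish_space measure \<Rightarrow> 'a measure \<Rightarrow> ('a \<times> 'a) measure set" where
  "couplings \<mu> \<mu>' = {\<gamma>. sets \<gamma> = sets (borel \<Otimes>\<^sub>M borel) \<and>
                        distr \<gamma> borel fst = \<mu> \<and> distr \<gamma> borel snd = \<mu>'}"

definition W1 :: "'a::polish_space measure \<Rightarrow> 'a measure \<Rightarrow> ennreal" where
  "W1 \<mu> \<mu>' = (INF \<gamma>\<in>couplings \<mu> \<mu>'. \<integral>\<^sup>+ p. ennreal (dist (fst p) (snd p)) \<partial>\<gamma>)"

definition ollivier_ricci :: "('a::polish_space \<Rightarrow> 'a measure) \<Rightarrow> ereal" where
  "ollivier_ricci m = (INF p\<in>{p::'a\<times>'a. fst p \<noteq> snd p}.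
       1 - enn2ereal (W1 (m (fst p)) (m (snd p))) / ereal (dist (fst p) (snd p)))"

end

theory Submission imports Defs begin

definition lip :: "real \<Rightarrow> ('a::metric_space \<Rightarrow> real) \<Rightarrow> bool" where
  "lip L f \<longleftrightarrow> (\<forall>x y. \<bar>f x - f y\<bar> \<le> L * dist x y)"
definition bnd :: "real \<Rightarrow> ('a \<Rightarrow> real) \<Rightarrow> bool" where
  "bnd B f \<longleftrightarrow> (\<forall>x. \<bar>f x\<bar> \<le> B)"

lemma lip_cont: "lip L f \<Longrightarrow> continuous_on UNIV f"
  unfolding lip_def continuous_on_iff
proof (intro ballI allI impI)
  fix x and e :: real assume H: "\<forall>x y. \<bar>f x - f y\<bar> \<le> L * dist x y" and e: "0 < e"
  show "\<exists>d>0. \<forall>x'\<in>UNIV. dist x' x < d \<longrightarrow> dist (f x') (f x) < e"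
  proof (intro exI[of _ "e / (\<bar>L\<bar> + 1)"] conjI ballI impI)
    show "0 < e / (\<bar>L\<bar> + 1)" using e by simp
    fix x' assume d: "dist x' x < e / (\<bar>L\<bar> + 1)"
    have "dist (f x') (f x) \<le> L * dist x' x" using H by (simp add: dist_real_def)
    also have "\<dots> \<le> \<bar>L\<bar> * dist x' x" by (simp add: mult_right_mono)
    also have "\<dots> \<le> (\<bar>L\<bar> + 1) * dist x' x" by (simp add: mult_right_mono)
    also have "\<dots> < e" using d by (simp add: field_simps)
    finally show "dist (f x') (f x) < e" .
  qed
qed

lemma lip_meas: "lip L f \<Longrightarrow> f \<in> borel_measurable borel"
  using lip_cont borel_measurable_continuous_onI by blast

lemma bnd_prob:
  assumes "prob_space M" "sets M = sets borel" "bnd B f" "f \<in> borel_measurable borel"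
  shows "\<bar>\<integral>z. f z \<partial>M\<bar> \<le> B"
proof -
  interpret prob_space M by fact
  have fm: "f \<in> borel_measurable M" by (subst measurable_cong_sets[OF assms(2) refl]) (rule assms(4))
  have bB: "\<bar>f x\<bar> \<le> B" for x using assms(3) unfolding bnd_def by blast
  have i: "integrable M f"
    by (rule integrable_const_bound[of _ B]) (use bB fm in auto)
  have "\<bar>\<integral>z. f z \<partial>M\<bar> \<le> (\<integral>z. \<bar>f z\<bar> \<partial>M)" by (rule integral_abs_bound)
  also have "\<dots> \<le> (\<integral>z. B \<partial>M)" by (rule integral_mono) (use i bB in auto)
  also have "\<dots> = B" using prob_space by simp
  finally show ?thesis .
qed

lemma fK_lip: "lip (real k) (\<lambda>x. max 0 (1 - real k * infdist x K))"
  unfolding lip_def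
proof (intro allI)
  fix x y
  have t: "\<bar>infdist x K - infdist y K\<bar> \<le> dist x y"
    using infdist_triangle[of x K y] infdist_triangle[of y K x] by (auto simp: dist_commute abs_le_iff)
  have m: "\<bar>max 0 u - max 0 v\<bar> \<le> \<bar>u - v\<bar>" for u v :: real by (auto simp: max_def abs_le_iff)
  have "\<bar>(1 - real k * infdist x K) - (1 - real k * infdist y K)\<bar> = \<bar>real k * (infdist x K - infdist y K)\<bar>"
    by (simp add: algebra_simps)
  also have "\<dots> = real k * \<bar>infdist x K - infdist y K\<bar>" by (simp add: abs_mult)
  also have "\<dots> \<le> real k * dist x y" using t by (simp add: mult_left_mono)
  finally show "\<bar>max 0 (1 - real k * infdist x K) - max 0 (1 - real k * infdist y K)\<bar> \<le> real k * dist x y"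
    using m order_trans by blast
qed

lemma fK_bnd: "bnd 1 (\<lambda>x. max 0 (1 - real k * infdist x K))"
  unfolding bnd_def
proof
  fix x
  have "0 \<le> real k * infdist x K" by (simp add: infdist_nonneg)
  then show "\<bar>max 0 (1 - real k * infdist x K)\<bar> \<le> 1" by (simp add: max_def abs_le_iff)
qed

lemma fK_lim:
  fixes \<mu> :: "'a::metric_space measure"
  assumes s: "sets \<mu> = sets borel" and fm: "finite_measure \<mu>" and cK: "closed K" and ne: "K \<noteq> {}"
  shows "(\<lambda>k. \<integral>x. max 0 (1 - real k * infdist x K) \<partial>\<mu>) \<longlonglongrightarrow> measure \<mu> K"
proof -
  have sp: "space \<mu> = UNIV" using sets_eq_imp_space_eq[OF s] by simp
  have KB: "K \<in> sets \<mu>" using cK s by simp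
  have "(\<lambda>k. \<integral>x. max 0 (1 - real k * infdist x K) \<partial>\<mu>) \<longlonglongrightarrow> (\<integral>x. indicator K x \<partial>\<mu>)"
  proof (rule integral_dominated_convergence[where w="\<lambda>_. 1"])
    show "(indicator K :: 'a \<Rightarrow> real) \<in> borel_measurable \<mu>" using KB by simp
    show "(\<lambda>x. max 0 (1 - real k * infdist x K)) \<in> borel_measurable \<mu>" for k
      by (subst measurable_cong_sets[OF s refl]) (rule lip_meas[OF fK_lip])
    show "integrable \<mu> (\<lambda>_. 1::real)" by (rule finite_measure.integrable_const[OF fm])
    show "AE x in \<mu>. norm (max 0 (1 - real k * infdist x K)) \<le> 1" for k
      using fK_bnd[of k K] by (auto simp: bnd_def intro!: AE_I2)
    show "AE x in \<mu>. (\<lambda>k. max 0 (1 - real k * infdist x K)) \<longlonglongrightarrow> indicator K x"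
    proof (intro AE_I2)
      fix x
      show "(\<lambda>k. max 0 (1 - real k * infdist x K)) \<longlonglongrightarrow> indicator K x"
      proof (cases "x \<in> K")
        case True
        then show ?thesis by (simp add: infdist_zero)
      next
        case False
        have "infdist x K \<noteq> 0" using in_closed_iff_infdist_zero[OF cK ne, of x] False by simp
        then have d: "0 < infdist x K" using infdist_nonneg[of x K] by simp
        obtain N :: nat where N: "1 / infdist x K < real N" using reals_Archimedean2 by blast
        have "eventually (\<lambda>k. max 0 (1 - real k * infdist x K) = indicator K x) sequentially"
          unfolding eventually_sequentially
        proof (intro exI[of _ N] allI impI)
          fix k assume "N \<le> k"
          then have "1 / infdist x K < real k" using N by linarith
          then have "1 < real k * infdist x K" using d by (simp add: field_simps)
          then show "max 0 (1 - real k * infdist x K) = indicator K x" using False by simp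
        qed
        then show ?thesis by (rule tendsto_eventually)
      qed
    qed
  qed
  moreover have "(\<integral>x. indicator K x \<partial>\<mu>) = measure \<mu> K" using sp by simp
  ultimately show ?thesis by simp
qed

locale mrw =
  fixes m :: "'a::polish_space \<Rightarrow> 'a measure" and c :: real
  assumes prob: "\<And>x. prob_space (m x)" and sets_m: "\<And>x. sets (m x) = sets borel"
  and meas: "\<And>A. A \<in> sets borel \<Longrightarrow> (\<lambda>x. emeasure (m x) A) \<in> borel_measurable borel"
  and c0: "0 \<le> c" and c1: "c < 1"
  and W: "\<And>x y. x \<noteq> y \<Longrightarrow> W1 (m x) (m y) \<le> ennreal (c * dist x y)"
begin

lemma kernel: "m \<in> borel \<rightarrow>\<^sub>M subprob_algebra borel"
  by (rule measurable_subprob_algebra) (auto simp: prob sets_m meas prob_space_imp_subprob_space)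

lemma iter_sets: "sets (m_iter m x n) = sets borel \<and> prob_space (m_iter m x n)"
proof (induction n)
  case 0
  then show ?case by (simp add: prob_space_return)
next
  case (Suc n)
  then have ne: "space (m_iter m x n) \<noteq> {}"
    using prob_space.not_empty by blast
  have "sets (m_iter m x (Suc n)) = sets borel"
    using Suc ne kernel by (simp add: sets_m)
  moreover have "prob_space (m_iter m x (Suc n))"
    using Suc kernel by (auto intro!: prob_space.prob_space_bind simp: prob measurable_cong_sets[OF Suc[THEN conjunct1] refl])
  ultimately show ?case by simp
qed

lemma iter_kernel: "(\<lambda>x. m_iter m x n) \<in> borel \<rightarrow>\<^sub>M subprob_algebra borel"
proof (induction n)
  case 0
  then show ?case by (simp add: return_measurable)
next
  case (Suc n)
  then show ?case using kernel by (simp add: measurable_bind2)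
qed

lemma iter_Suc': "m_iter m x (Suc n) = bind (m x) (\<lambda>z. m_iter m z n)"
proof (induction n)
  case 0
  have "m_iter m x (Suc 0) = m x" using kernel by (simp add: bind_return)
  also have "\<dots> = bind (m x) (return borel)" using bind_return''[of "m x" borel] sets_m by simp
  finally show ?case by simp
next
  case (Suc n)
  have "m_iter m x (Suc (Suc n)) = bind (m_iter m x (Suc n)) m" by simp
  also have "\<dots> = bind (bind (m x) (\<lambda>z. m_iter m z n)) m" using Suc by simp
  also have "\<dots> = bind (m x) (\<lambda>z. bind (m_iter m z n) m)"
  proof (rule bind_assoc[OF _ kernel])
    show "(\<lambda>z. m_iter m z n) \<in> m x \<rightarrow>\<^sub>M subprob_algebra borel"
      by (subst measurable_cong_sets[OF sets_m refl]) (rule iter_kernel)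
  qed
  finally show ?case by simp
qed

lemma coupling_bound:
  assumes lf: "lip L f" and bf: "bnd B f" and L0: "0 \<le> L"
    and g: "\<gamma> \<in> couplings (m x) (m y)"
    and lt: "(\<integral>\<^sup>+ p. ennreal (dist (fst p) (snd p)) \<partial>\<gamma>) < ennreal r"
  shows "(\<integral>z. f z \<partial>m x) - (\<integral>z. f z \<partial>m y) \<le> L * r"
proof -
  have sg: "sets \<gamma> = sets (borel \<Otimes>\<^sub>M borel)" and dx: "distr \<gamma> borel fst = m x"
    and dy: "distr \<gamma> borel snd = m y" using g by (auto simp: couplings_def)
  have fm[measurable]: "f \<in> borel_measurable borel" using lf lip_meas by blast
  have mfst: "fst \<in> \<gamma> \<rightarrow>\<^sub>M borel" by (subst measurable_cong_sets[OF sg refl]) (rule measurable_fst)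
  have msnd: "snd \<in> \<gamma> \<rightarrow>\<^sub>M borel" by (subst measurable_cong_sets[OF sg refl]) (rule measurable_snd)
  have spg: "space \<gamma> = UNIV" using sets_eq_imp_space_eq[OF sg] by (simp add: space_pair_measure)
  have "emeasure \<gamma> (space \<gamma>) = emeasure (distr \<gamma> borel fst) UNIV"
    using mfst by (subst emeasure_distr) (auto simp: spg)
  also have "\<dots> = 1" using dx prob[of x] prob_space.emeasure_space_1[of "m x"]
    sets_eq_imp_space_eq[OF sets_m[of x]] by simp
  finally have fin: "finite_measure \<gamma>" by (intro finite_measureI) simp
  have m1: "(\<lambda>p. f (fst p)) \<in> borel_measurable \<gamma>" using mfst fm by (rule measurable_compose)
  have m2: "(\<lambda>p. f (snd p)) \<in> borel_measurable \<gamma>" using msnd fm by (rule measurable_compose)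
  have md: "(\<lambda>p. dist (fst p) (snd p)) \<in> borel_measurable \<gamma>"
    using mfst msnd by (rule borel_measurable_dist)
  have i1: "integrable \<gamma> (\<lambda>p. f (fst p))"
    using bf m1 by (intro finite_measure.integrable_const_bound[OF fin, of _ B]) (auto simp: bnd_def)
  have i2: "integrable \<gamma> (\<lambda>p. f (snd p))"
    using bf m2 by (intro finite_measure.integrable_const_bound[OF fin, of _ B]) (auto simp: bnd_def)
  have id: "integrable \<gamma> (\<lambda>p. dist (fst p) (snd p))"
    using md lt by (intro integrableI_bounded) (auto intro: order.strict_trans)
  have "(\<integral>z. f z \<partial>m x) = (\<integral>p. f (fst p) \<partial>\<gamma>)"
    using dx integral_distr[OF mfst fm] by simp
  moreover have "(\<integral>z. f z \<partial>m y) = (\<integral>p. f (snd p) \<partial>\<gamma>)"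
    using dy integral_distr[OF msnd fm] by simp
  ultimately have "(\<integral>z. f z \<partial>m x) - (\<integral>z. f z \<partial>m y) = (\<integral>p. f (fst p) - f (snd p) \<partial>\<gamma>)"
    using i1 i2 by simp
  also have "\<dots> \<le> (\<integral>p. L * dist (fst p) (snd p) \<partial>\<gamma>)"
    using lf i1 i2 id by (intro integral_mono) (auto simp: lip_def abs_le_iff)
  also have "\<dots> = L * (\<integral>p. dist (fst p) (snd p) \<partial>\<gamma>)" by simp
  also have "\<dots> \<le> L * r"
  proof -
    have "ennreal (\<integral>p. dist (fst p) (snd p) \<partial>\<gamma>) < ennreal r"
      using lt nn_integral_eq_integral[OF id] by simp
    then have "(\<integral>p. dist (fst p) (snd p) \<partial>\<gamma>) \<le> r"
      by (simp add: ennreal_less_iff less_imp_le)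
    then show ?thesis using L0 by (simp add: mult_left_mono)
  qed
  finally show ?thesis .
qed

lemma step_lip:
  assumes lf: "lip L f" and bf: "bnd B f" and L0: "0 \<le> L"
  shows "lip (c * L) (\<lambda>x. \<integral>z. f z \<partial>m x)"
  unfolding lip_def
proof (intro allI)
  fix x y
  show "\<bar>(\<integral>z. f z \<partial>m x) - (\<integral>z. f z \<partial>m y)\<bar> \<le> c * L * dist x y"
  proof (cases "x = y")
    case True then show ?thesis by simp
  next
    case False
    have key: "(\<integral>z. f z \<partial>m a) - (\<integral>z. f z \<partial>m b) \<le> c * L * dist x y + L * e"
      if "0 < e" "a \<noteq> b" "dist a b = dist x y" for a b e
    proof -
      have "W1 (m a) (m b) \<le> ennreal (c * dist a b)" using W that by blast
      also have "\<dots> < ennreal (c * dist a b + e)" using that c0 by (simp add: ennreal_lessI)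
      finally obtain \<gamma> where g: "\<gamma> \<in> couplings (m a) (m b)"
        and lt: "(\<integral>\<^sup>+ p. ennreal (dist (fst p) (snd p)) \<partial>\<gamma>) < ennreal (c * dist a b + e)"
        unfolding W1_def by (auto simp: INF_less_iff)
      have "(\<integral>z. f z \<partial>m a) - (\<integral>z. f z \<partial>m b) \<le> L * (c * dist a b + e)"
        by (rule coupling_bound[OF lf bf L0 g lt])
      then show ?thesis using that by (simp add: algebra_simps)
    qed
    have "(\<integral>z. f z \<partial>m x) - (\<integral>z. f z \<partial>m y) \<le> c * L * dist x y"
    proof (rule field_le_epsilon)
      fix e :: real assume e: "0 < e"
      show "(\<integral>z. f z \<partial>m x) - (\<integral>z. f z \<partial>m y) \<le> c * L * dist x y + e"
      proof (cases "L = 0")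
        case True then show ?thesis using key[of 1 x y] False e by simp
      next
        case nz: False
        then have "0 < e / L" using L0 e by simp
        from key[OF this False refl] show ?thesis using nz by simp
      qed
    qed
    moreover have "(\<integral>z. f z \<partial>m y) - (\<integral>z. f z \<partial>m x) \<le> c * L * dist x y"
    proof (rule field_le_epsilon)
      fix e :: real assume e: "0 < e"
      show "(\<integral>z. f z \<partial>m y) - (\<integral>z. f z \<partial>m x) \<le> c * L * dist x y + e"
      proof (cases "L = 0")
        case True then show ?thesis using key[of 1 y x] False e by (simp add: dist_commute)
      next
        case nz: False
        then have "0 < e / L" using L0 e by simp
        from key[OF this, of y x] False nz show ?thesis by (simp add: dist_commute)
      qed
    qed
    ultimately show ?thesis by (simp add: abs_le_iff)
  qed
qed

lemma Q_Suc:
  assumes "bnd B f" "f \<in> borel_measurable borel"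
  shows "(\<integral>z. f z \<partial>m_iter m x (Suc n)) = (\<integral>y. (\<integral>z. f z \<partial>m y) \<partial>m_iter m x n)"
proof -
  have ps: "prob_space (m_iter m x n)" using iter_sets by blast
  have k: "m \<in> m_iter m x n \<rightarrow>\<^sub>M subprob_algebra borel"
    by (subst measurable_cong_sets[OF iter_sets[THEN conjunct1] refl]) (rule kernel)
  have "(\<integral>z. f z \<partial>bind (m_iter m x n) m) = (\<integral>y. (\<integral>z. f z \<partial>m y) \<partial>m_iter m x n)"
  proof (rule integral_bind[where K=borel and B=B and B'=1])
    show "f \<in> borel_measurable borel" by fact
    show "\<bar>f y\<bar> \<le> B" for y using assms(1) by (simp add: bnd_def)
    show "m \<in> m_iter m x n \<rightarrow>\<^sub>M subprob_algebra borel" by (rule k)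
    show "finite_measure (m_iter m x n)" using ps by (rule prob_space.finite_measure)
    show "AE y in m_iter m x n. emeasure (m y) (space (m y)) \<le> ennreal 1"
      by (simp add: prob_space.emeasure_space_1[OF prob])
  qed
  then show ?thesis by simp
qed

lemma Q_lip:
  assumes "lip L f" "bnd B f" "0 \<le> L"
  shows "lip (c ^ n * L) (\<lambda>x. \<integral>z. f z \<partial>m_iter m x n) \<and> bnd B (\<lambda>x. \<integral>z. f z \<partial>m_iter m x n)"
  using assms
proof (induction n arbitrary: f L)
  case 0
  have fm: "f \<in> borel_measurable borel" using 0 lip_meas by blast
  have "(\<integral>z. f z \<partial>m_iter m x 0) = f x" for x using fm by (simp add: integral_return)
  then show ?case using 0 by simp
next
  case (Suc n)
  have fm: "f \<in> borel_measurable borel" using Suc lip_meas by blast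
  let ?P = "\<lambda>x. \<integral>z. f z \<partial>m x"
  have lP: "lip (c * L) ?P" using step_lip Suc.prems by blast
  have bP: "bnd B ?P" using bnd_prob[OF prob sets_m Suc.prems(2) fm] by (simp add: bnd_def)
  have IH: "lip (c ^ n * (c * L)) (\<lambda>x. \<integral>z. ?P z \<partial>m_iter m x n) \<and> bnd B (\<lambda>x. \<integral>z. ?P z \<partial>m_iter m x n)"
    using Suc.IH[OF lP bP] Suc.prems c0 by simp
  have eq: "(\<lambda>x. \<integral>z. f z \<partial>m_iter m x (Suc n)) = (\<lambda>x. \<integral>z. ?P z \<partial>m_iter m x n)"
    using Q_Suc[OF Suc.prems(2) fm] by simp
  show ?case unfolding eq using IH by (simp add: mult_ac)
qed

lemma inv_bind:
  assumes s: "sets \<mu> = sets borel" and inv: "\<forall>A\<in>sets borel. emeasure \<mu> A = (\<integral>\<^sup>+ x. emeasure (m x) A \<partial>\<mu>)"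
  shows "bind \<mu> m = \<mu>"
proof -
  have sp: "space \<mu> = UNIV" using sets_eq_imp_space_eq[OF s] by simp
  have k: "m \<in> \<mu> \<rightarrow>\<^sub>M subprob_algebra borel"
    by (subst measurable_cong_sets[OF s refl]) (rule kernel)
  show ?thesis
  proof (rule measure_eqI)
    show "sets (bind \<mu> m) = sets \<mu>" using s sp by (simp add: sets_m)
    fix A assume "A \<in> sets (bind \<mu> m)"
    then have A: "A \<in> sets borel" using s sp by (simp add: sets_m)
    show "emeasure (bind \<mu> m) A = emeasure \<mu> A"
      using emeasure_bind[OF _ k A] sp inv A by simp
  qed
qed

lemma inv_int:
  assumes s: "sets \<mu> = sets borel" and inv: "\<forall>A\<in>sets borel. emeasure \<mu> A = (\<integral>\<^sup>+ x. emeasure (m x) A \<partial>\<mu>)"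
    and fin: "emeasure \<mu> (space \<mu>) < \<infinity>"
    and "bnd B f" "f \<in> borel_measurable borel"
  shows "(\<integral>x. (\<integral>z. f z \<partial>m x) \<partial>\<mu>) = (\<integral>z. f z \<partial>\<mu>)"
proof -
  have k: "m \<in> \<mu> \<rightarrow>\<^sub>M subprob_algebra borel"
    by (subst measurable_cong_sets[OF s refl]) (rule kernel)
  have "(\<integral>z. f z \<partial>bind \<mu> m) = (\<integral>x. (\<integral>z. f z \<partial>m x) \<partial>\<mu>)"
  proof (rule integral_bind[where K=borel and B=B and B'=1])
    show "f \<in> borel_measurable borel" by fact
    show "\<bar>f y\<bar> \<le> B" for y using assms(4) by (simp add: bnd_def)
    show "m \<in> \<mu> \<rightarrow>\<^sub>M subprob_algebra borel" by (rule k)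
    show "finite_measure \<mu>" using fin by (intro finite_measureI) simp
    show "AE y in \<mu>. emeasure (m y) (space (m y)) \<le> ennreal 1"
      by (simp add: prob_space.emeasure_space_1[OF prob])
  qed
  then show ?thesis using inv_bind[OF s inv] by simp
qed

lemma Q_inv:
  assumes s: "sets \<mu> = sets borel" and inv: "\<forall>A\<in>sets borel. emeasure \<mu> A = (\<integral>\<^sup>+ x. emeasure (m x) A \<partial>\<mu>)"
    and fin: "emeasure \<mu> (space \<mu>) < \<infinity>"
    and "lip L f" "bnd B f" "0 \<le> L"
  shows "(\<integral>x. (\<integral>z. f z \<partial>m_iter m x n) \<partial>\<mu>) = (\<integral>z. f z \<partial>\<mu>)"
  using assms(4-)
proof (induction n arbitrary: f L)
  case 0
  have fm: "f \<in> borel_measurable borel" using 0 lip_meas by blast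
  have "(\<integral>z. f z \<partial>m_iter m x 0) = f x" for x using fm by (simp add: integral_return)
  then show ?case by simp
next
  case (Suc n)
  have fm: "f \<in> borel_measurable borel" using Suc lip_meas by blast
  let ?P = "\<lambda>x. \<integral>z. f z \<partial>m x"
  have lP: "lip (c * L) ?P" using step_lip Suc.prems by blast
  have bP: "bnd B ?P" using bnd_prob[OF prob sets_m Suc.prems(2) fm] by (simp add: bnd_def)
  have eq: "(\<lambda>x. \<integral>z. f z \<partial>m_iter m x (Suc n)) = (\<lambda>x. \<integral>z. ?P z \<partial>m_iter m x n)"
    using Q_Suc[OF Suc.prems(2) fm] by simp
  show ?case unfolding eq using Suc.IH[OF lP bP] Suc.prems c0 inv_int[OF s inv fin Suc.prems(2) fm]
    by simp
qed

lemma conv: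
  assumes s: "sets \<mu> = sets borel" and inv: "\<forall>A\<in>sets borel. emeasure \<mu> A = (\<integral>\<^sup>+ x. emeasure (m x) A \<partial>\<mu>)"
    and fin: "emeasure \<mu> (space \<mu>) < \<infinity>"
    and lf: "lip L f" and bf: "bnd B f" and L0: "0 \<le> L"
  shows "(\<lambda>n. measure \<mu> (space \<mu>) * (\<integral>z. f z \<partial>m_iter m x0 n)) \<longlonglongrightarrow> (\<integral>z. f z \<partial>\<mu>)"
proof -
  define Q where "Q n y = (\<integral>z. f z \<partial>m_iter m y n)" for n y
  have sp: "space \<mu> = UNIV" using sets_eq_imp_space_eq[OF s] by simp
  have finm: "finite_measure \<mu>" using fin by (intro finite_measureI) simp
  have QL: "lip (c ^ n * L) (Q n)" and QB: "bnd B (Q n)" for n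
    using Q_lip[OF lf bf L0, of n] unfolding Q_def by auto
  have Qm: "Q n \<in> borel_measurable \<mu>" for n
    by (subst measurable_cong_sets[OF s refl]) (rule lip_meas[OF QL])
  have QI: "integrable \<mu> (Q n)" for n
    by (rule finite_measure.integrable_const_bound[OF finm, of _ B]) (use QB Qm in \<open>auto simp: bnd_def\<close>)
  have Qinv: "(\<integral>y. Q n y \<partial>\<mu>) = (\<integral>z. f z \<partial>\<mu>)" for n
    unfolding Q_def by (rule Q_inv[OF s inv fin lf bf L0])
  have eq: "measure \<mu> (space \<mu>) * Q n x0 - (\<integral>z. f z \<partial>\<mu>) = (\<integral>y. Q n x0 - Q n y \<partial>\<mu>)" for n
  proof -
    have "(\<integral>y. Q n x0 - Q n y \<partial>\<mu>) = (\<integral>y. Q n x0 \<partial>\<mu>) - (\<integral>y. Q n y \<partial>\<mu>)"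
      using QI finite_measure.integrable_const[OF finm] by (intro Bochner_Integration.integral_diff) auto
    then show ?thesis using Qinv by (simp add: mult.commute)
  qed
  have lim: "(\<lambda>n. \<integral>y. Q n x0 - Q n y \<partial>\<mu>) \<longlonglongrightarrow> (\<integral>y. 0 \<partial>\<mu>)"
  proof (rule integral_dominated_convergence[where w="\<lambda>_. 2 * B"])
    show "(\<lambda>y. 0::real) \<in> borel_measurable \<mu>" by simp
    show "(\<lambda>y. Q n x0 - Q n y) \<in> borel_measurable \<mu>" for n using Qm by simp
    show "integrable \<mu> (\<lambda>_. 2 * B)" by (rule finite_measure.integrable_const[OF finm])
    show "AE y in \<mu>. norm (Q n x0 - Q n y) \<le> 2 * B" for n
    proof (intro AE_I2)
      fix y
      have "\<bar>Q n x0\<bar> \<le> B" "\<bar>Q n y\<bar> \<le> B" using QB[of n] by (auto simp: bnd_def)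
      then show "norm (Q n x0 - Q n y) \<le> 2 * B" unfolding real_norm_def by arith
    qed
    show "AE y in \<mu>. (\<lambda>n. Q n x0 - Q n y) \<longlonglongrightarrow> 0"
    proof (intro AE_I2)
      fix y
      have lim0: "(\<lambda>n. c ^ n * (L * dist x0 y)) \<longlonglongrightarrow> 0"
        using c0 c1 by (intro tendsto_mult_left_zero LIMSEQ_power_zero) simp
      have ev: "eventually (\<lambda>n. norm (Q n x0 - Q n y) \<le> c ^ n * (L * dist x0 y)) sequentially"
        by (rule always_eventually) (use QL in \<open>simp add: lip_def mult.assoc\<close>)
      show "(\<lambda>n. Q n x0 - Q n y) \<longlonglongrightarrow> 0"
        by (rule Lim_null_comparison[OF ev lim0])
    qed
  qed
  then have "(\<lambda>n. measure \<mu> (space \<mu>) * Q n x0 - (\<integral>z. f z \<partial>\<mu>)) \<longlonglongrightarrow> 0"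
    unfolding eq by (simp only: Bochner_Integration.integral_zero)
  then have "(\<lambda>n. measure \<mu> (space \<mu>) * Q n x0) \<longlonglongrightarrow> (\<integral>z. f z \<partial>\<mu>)"
    by (simp only: LIM_zero_iff)
  then show ?thesis unfolding Q_def .
qed

lemma pos_Q_pos:
  fixes g u :: "'a \<Rightarrow> real"
  assumes "0 < (\<integral>z. g z \<partial>m_iter m x0 n)" and gU: "\<And>y. g y \<noteq> 0 \<Longrightarrow> 0 < u y"
    and um: "u \<in> borel_measurable borel"
  shows "0 < (\<integral>\<^sup>+ y. ennreal (u y) \<partial>m_iter m x0 n)"
proof (rule ccontr)
  let ?M = "m_iter m x0 n"
  have sM: "sets ?M = sets borel" using iter_sets by blast
  have umM: "(\<lambda>y. ennreal (u y)) \<in> borel_measurable ?M"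
    by (subst measurable_cong_sets[OF sM refl]) (use um in simp)
  assume "\<not> 0 < (\<integral>\<^sup>+ y. ennreal (u y) \<partial>?M)"
  then have "(\<integral>\<^sup>+ y. ennreal (u y) \<partial>?M) = 0" by (simp add: zero_less_iff_neq_zero)
  then have "AE y in ?M. ennreal (u y) = 0" using nn_integral_0_iff_AE[OF umM] by simp
  then have "AE y in ?M. g y = 0"
  proof (rule AE_mp, intro AE_I2 impI)
    fix y assume "ennreal (u y) = 0"
    then have "\<not> 0 < u y" by (simp add: ennreal_eq_0_iff)
    then show "g y = 0" using gU by blast
  qed
  then have "(\<integral>z. g z \<partial>?M) = 0" by (rule integral_eq_zero_AE)
  then show False using assms(1) by linarith
qed

lemma heat_pos:
  assumes "0 < t" "0 < (\<integral>\<^sup>+ y. ennreal (u y) \<partial>m_iter m x n)"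
  shows "0 < heat_pt m u t x"
proof -
  let ?f = "\<lambda>n. ennreal (t ^ n / fact n) * (\<integral>\<^sup>+ y. ennreal (u y) \<partial>m_iter m x n)"
  have "0 < ?f n" using assms by (simp add: ennreal_zero_less_mult_iff)
  also have "?f n = sum ?f {n}" by simp
  also have "\<dots> \<le> suminf ?f" by (rule sum_le_suminf) (auto intro: summableI)
  finally show ?thesis unfolding heat_pt_def by (simp add: ennreal_zero_less_mult_iff)
qed

lemma ws:
  assumes s: "sets \<nu> = sets borel" and inv: "\<forall>A\<in>sets borel. emeasure \<nu> A = (\<integral>\<^sup>+ x. emeasure (m x) A \<partial>\<nu>)"
    and fin: "emeasure \<nu> (space \<nu>) < \<infinity>"
  shows "weakly_strong_m_connected m \<nu>"
  unfolding weakly_strong_m_connected_def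
proof (intro allI impI)
  fix u :: "'a \<Rightarrow> real" and x0 :: 'a and t :: real
  assume H: "continuous_on UNIV u \<and> (\<forall>x. 0 \<le> u x) \<and> integrable \<nu> (\<lambda>x. (u x)\<^sup>2) \<and> \<not> (AE x in \<nu>. u x = 0)"
    and t: "0 < t"
  have uc: "continuous_on UNIV u" and u0: "\<And>x. 0 \<le> u x" and nAE: "\<not> (AE x in \<nu>. u x = 0)"
    using H by auto
  have um: "u \<in> borel_measurable borel" using uc borel_measurable_continuous_onI by blast
  have sp: "space \<nu> = UNIV" using sets_eq_imp_space_eq[OF s] by simp
  have finm: "finite_measure \<nu>" using fin by (intro finite_measureI) simp
  have "\<exists>n. 0 < (\<integral>\<^sup>+ y. ennreal (u y) \<partial>m_iter m x0 n)"
  proof (cases "0 < u x0")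
    case True
    have "(\<integral>\<^sup>+ y. ennreal (u y) \<partial>m_iter m x0 0) = ennreal (u x0)"
      using um by (simp add: nn_integral_return)
    then show ?thesis using True by (intro exI[of _ 0]) simp
  next
    case False
    define U where "U = {x. 0 < u x}"
    have oU: "open U" unfolding U_def using uc by (simp add: open_Collect_less)
    have cne: "- U \<noteq> {}" using False U_def by auto
    define g where "g x = min 1 (infdist x (- U))" for x
    have lg: "lip 1 g" unfolding lip_def g_def
    proof (intro allI)
      fix x y
      have "infdist x (- U) \<le> infdist y (- U) + dist x y" "infdist y (- U) \<le> infdist x (- U) + dist x y"
        using infdist_triangle[of x "- U" y] infdist_triangle[of y "- U" x] by (auto simp: dist_commute)
      then show "\<bar>min 1 (infdist x (- U)) - min 1 (infdist y (- U))\<bar> \<le> 1 * dist x y"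
        by (simp add: abs_le_iff min_def)
    qed
    have bg: "bnd 1 g" unfolding bnd_def g_def
    proof
      fix x
      have "0 \<le> infdist x (- U)" by (rule infdist_nonneg)
      then show "\<bar>min 1 (infdist x (- U))\<bar> \<le> 1" by (simp add: min_def abs_le_iff)
    qed
    have gpos: "0 < g x \<longleftrightarrow> x \<in> U" for x
    proof -
      have "x \<in> closure (- U) \<longleftrightarrow> infdist x (- U) = 0" by (rule in_closure_iff_infdist_zero[OF cne])
      moreover have "closure (- U) = - U" using oU by (simp add: closed_open)
      ultimately show ?thesis unfolding g_def using infdist_nonneg[of x "- U"]
        by (auto simp: min_def)
    qed
    have g0: "0 \<le> g x" for x unfolding g_def using infdist_nonneg by (auto simp: min_def)
    have gm: "g \<in> borel_measurable \<nu>"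
      by (subst measurable_cong_sets[OF s refl]) (rule lip_meas[OF lg])
    have gi: "integrable \<nu> g"
      by (rule finite_measure.integrable_const_bound[OF finm, of _ 1]) (use bg gm in \<open>auto simp: bnd_def\<close>)
    have Ipos: "0 < (\<integral>z. g z \<partial>\<nu>)"
    proof -
      have "0 \<le> (\<integral>z. g z \<partial>\<nu>)" using g0 by simp
      moreover have "(\<integral>z. g z \<partial>\<nu>) \<noteq> 0"
      proof
        assume "(\<integral>z. g z \<partial>\<nu>) = 0"
        then have "AE x in \<nu>. g x = 0" using integral_nonneg_eq_0_iff_AE[OF gi] g0 by simp
        then have "AE x in \<nu>. u x = 0"
        proof (rule AE_mp, intro AE_I2 impI)
          fix x assume "g x = 0"
          then have "x \<notin> U" using gpos[of x] by simp
          then show "u x = 0" using u0[of x] by (simp add: U_def)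
        qed
        then show False using nAE by simp
      qed
      ultimately show ?thesis by simp
    qed
    have lim: "(\<lambda>n. measure \<nu> (space \<nu>) * (\<integral>z. g z \<partial>m_iter m x0 n)) \<longlonglongrightarrow> (\<integral>z. g z \<partial>\<nu>)"
      by (rule conv[OF s inv fin lg bg]) simp
    then have "eventually (\<lambda>n. 0 < measure \<nu> (space \<nu>) * (\<integral>z. g z \<partial>m_iter m x0 n)) sequentially"
      using Ipos by (rule order_tendstoD)
    then obtain n where "0 < measure \<nu> (space \<nu>) * (\<integral>z. g z \<partial>m_iter m x0 n)"
      by (auto dest: eventually_happens)
    then have "0 < (\<integral>z. g z \<partial>m_iter m x0 n)"
      by (simp add: zero_less_mult_iff)
    moreover have "g y \<noteq> 0 \<Longrightarrow> 0 < u y" for y using gpos[of y] g0[of y] by (auto simp: U_def)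
    ultimately show ?thesis using pos_Q_pos um by blast
  qed
  then obtain n where "0 < (\<integral>\<^sup>+ y. ennreal (u y) \<partial>m_iter m x0 n)" by blast
  then show "0 < heat_pt m u t x0" using heat_pos t by blast
qed

lemma Nset_closed:
  assumes D: "D \<in> sets borel" and x: "x \<in> N_set m D" and A: "A \<in> sets borel"
  shows "N_set m D \<in> sets borel" and "emeasure (m x) (A \<inter> N_set m D) = emeasure (m x) A"
proof -
  define h where "h n z = emeasure (m_iter m z n) D" for n z
  have hm: "h n \<in> borel_measurable borel" for n
    unfolding h_def by (rule measurable_compose[OF iter_kernel measurable_emeasure_subprob_algebra[OF D]])
  have memN: "z \<in> N_set m D \<longleftrightarrow> (\<forall>n. h (Suc n) z = 0)" for z
  proof
    assume "z \<in> N_set m D" then show "\<forall>n. h (Suc n) z = 0"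
      unfolding N_set_def h_def by (simp del: m_iter.simps(2))
  next
    assume H: "\<forall>n. h (Suc n) z = 0"
    show "z \<in> N_set m D" unfolding N_set_def
    proof (intro CollectI allI impI)
      fix n :: nat assume "1 \<le> n"
      then obtain k where "n = Suc k" by (cases n) auto
      then show "emeasure (m_iter m z n) D = 0" using H by (simp add: h_def)
    qed
  qed
  have Neq: "N_set m D = (\<Inter>n\<in>UNIV. h (Suc n) -` {0} \<inter> space borel)"
    using memN by auto
  show NB: "N_set m D \<in> sets borel"
    unfolding Neq by (rule sets.countable_INT) (use measurable_sets[OF hm] in auto)
  have ne: "space (m x) \<noteq> {}" using prob[of x] prob_space.not_empty by blast
  have smx: "space (m x) = UNIV" using sets_eq_imp_space_eq[OF sets_m[of x]] by simp
  have AEk: "AE z in m x. h (Suc k) z = 0" for k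
  proof -
    have kz: "(\<lambda>z. m_iter m z (Suc k)) \<in> m x \<rightarrow>\<^sub>M subprob_algebra borel"
      by (subst measurable_cong_sets[OF sets_m refl]) (rule iter_kernel)
    have hmx: "h (Suc k) \<in> borel_measurable (m x)"
      by (subst measurable_cong_sets[OF sets_m refl]) (rule hm)
    have "0 = h (Suc (Suc k)) x" using x memN[of x] by metis
    also have "\<dots> = emeasure (bind (m x) (\<lambda>z. m_iter m z (Suc k))) D"
      unfolding h_def by (subst iter_Suc') (rule refl)
    also have "\<dots> = (\<integral>\<^sup>+ z. h (Suc k) z \<partial>m x)"
      unfolding h_def by (rule emeasure_bind[OF ne kz D])
    finally show ?thesis using nn_integral_0_iff_AE[OF hmx] by simp
  qed
  have "AE z in m x. \<forall>k. h (Suc k) z = 0" using AEk by (simp add: AE_all_countable)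
  then have "AE z in m x. z \<in> N_set m D" using memN by simp
  then have "emeasure (m x) (- N_set m D) = 0"
    using AE_iff_measurable[of "- N_set m D" "m x" "\<lambda>z. z \<in> N_set m D"] NB sets_m[of x] smx
    by auto
  then have null: "- N_set m D \<in> null_sets (m x)" using NB sets_m[of x] by (auto intro: null_setsI)
  show "emeasure (m x) (A \<inter> N_set m D) = emeasure (m x) A"
  proof -
    have "A \<inter> N_set m D = A - (- N_set m D)" by auto
    then show ?thesis using emeasure_Diff_null_set[OF null] A sets_m[of x] by simp
  qed
qed

end

locale mrw_nu = mrw m c for m :: "'a::polish_space \<Rightarrow> 'a measure" and c +
  fixes \<nu> :: "'a measure"
  assumes s: "sets \<nu> = sets borel"
    and inv: "\<forall>A\<in>sets borel. emeasure \<nu> A = (\<integral>\<^sup>+ x. emeasure (m x) A \<partial>\<nu>)"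
    and fin: "emeasure \<nu> (space \<nu>) < \<infinity>"
begin

lemma sp: "space \<nu> = UNIV" using sets_eq_imp_space_eq[OF s] by simp

lemma fin_set: "emeasure \<nu> A < \<infinity>"
proof -
  have "emeasure \<nu> A \<le> emeasure \<nu> (space \<nu>)"
    by (cases "A \<in> sets \<nu>") (auto intro!: emeasure_mono simp: sp emeasure_notin_sets sets.top[of \<nu>, unfolded sp])
  then show ?thesis using fin by (rule le_less_trans)
qed

lemma mx_meas: "A \<in> sets borel \<Longrightarrow> (\<lambda>x. emeasure (m x) A) \<in> borel_measurable \<nu>"
  by (subst measurable_cong_sets[OF s refl]) (rule meas)

lemma restr_inv:
  assumes NB: "N \<in> sets borel" and cl: "\<And>x A. x \<in> N \<Longrightarrow> A \<in> sets borel \<Longrightarrow> emeasure (m x) (A \<inter> N) = emeasure (m x) A"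
    and A: "A \<in> sets borel"
  shows "emeasure \<nu> (N \<inter> A) = (\<integral>\<^sup>+ x. indicator N x * emeasure (m x) A \<partial>\<nu>)"
    and "emeasure \<nu> (- N \<inter> A) = (\<integral>\<^sup>+ x. indicator (- N) x * emeasure (m x) A \<partial>\<nu>)"
proof -
  have iN: "indicator N \<in> borel_measurable \<nu>" using NB s by simp
  have iN': "indicator (- N) \<in> borel_measurable \<nu>" using NB s by (simp add: sets.compl_sets sp)
  have T: "(\<integral>\<^sup>+ x. indicator (- N) x * emeasure (m x) N \<partial>\<nu>) = 0"
  proof -
    have "emeasure \<nu> N = (\<integral>\<^sup>+ x. emeasure (m x) N \<partial>\<nu>)" using inv NB by blast
    also have "\<dots> = (\<integral>\<^sup>+ x. indicator N x * emeasure (m x) N + indicator (- N) x * emeasure (m x) N \<partial>\<nu>)"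
      by (intro nn_integral_cong) (auto split: split_indicator)
    also have "\<dots> = (\<integral>\<^sup>+ x. indicator N x * emeasure (m x) N \<partial>\<nu>) + (\<integral>\<^sup>+ x. indicator (- N) x * emeasure (m x) N \<partial>\<nu>)"
      using iN iN' mx_meas[OF NB] by (intro nn_integral_add borel_measurable_times_ennreal) auto
    also have "(\<integral>\<^sup>+ x. indicator N x * emeasure (m x) N \<partial>\<nu>) = (\<integral>\<^sup>+ x. indicator N x \<partial>\<nu>)"
    proof (intro nn_integral_cong)
      fix x
      show "indicator N x * emeasure (m x) N = indicator N x"
      proof (cases "x \<in> N")
        case True
        have "emeasure (m x) N = emeasure (m x) (UNIV \<inter> N)" by simp
        also have "\<dots> = emeasure (m x) UNIV" using cl[OF True, of UNIV] by simp
        also have "\<dots> = 1" using prob_space.emeasure_space_1[OF prob[of x]]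
          sets_eq_imp_space_eq[OF sets_m[of x]] by simp
        finally show ?thesis by simp
      qed simp
    qed
    also have "\<dots> = emeasure \<nu> N" using NB s by simp
    finally have "emeasure \<nu> N + 0 = emeasure \<nu> N + (\<integral>\<^sup>+ x. indicator (- N) x * emeasure (m x) N \<partial>\<nu>)"
      by simp
    then show ?thesis using fin_set[of N] by (auto simp: ennreal_add_left_cancel)
  qed
  show first: "emeasure \<nu> (N \<inter> A) = (\<integral>\<^sup>+ x. indicator N x * emeasure (m x) A \<partial>\<nu>)"
  proof -
    have NA: "N \<inter> A \<in> sets borel" using NB A by auto
    have "emeasure \<nu> (N \<inter> A) = (\<integral>\<^sup>+ x. emeasure (m x) (N \<inter> A) \<partial>\<nu>)" using inv NA by blast
    also have "\<dots> = (\<integral>\<^sup>+ x. indicator N x * emeasure (m x) A + indicator (- N) x * emeasure (m x) (N \<inter> A) \<partial>\<nu>)"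
    proof (intro nn_integral_cong)
      fix x
      show "emeasure (m x) (N \<inter> A) = indicator N x * emeasure (m x) A + indicator (- N) x * emeasure (m x) (N \<inter> A)"
        using cl[of x A] A by (cases "x \<in> N") (auto simp: Int_commute)
    qed
    also have "\<dots> = (\<integral>\<^sup>+ x. indicator N x * emeasure (m x) A \<partial>\<nu>) + (\<integral>\<^sup>+ x. indicator (- N) x * emeasure (m x) (N \<inter> A) \<partial>\<nu>)"
      using iN iN' mx_meas[OF A] mx_meas[OF NA] by (intro nn_integral_add borel_measurable_times_ennreal) auto
    also have "(\<integral>\<^sup>+ x. indicator (- N) x * emeasure (m x) (N \<inter> A) \<partial>\<nu>) = 0"
    proof -
      have "(\<integral>\<^sup>+ x. indicator (- N) x * emeasure (m x) (N \<inter> A) \<partial>\<nu>) \<le> (\<integral>\<^sup>+ x. indicator (- N) x * emeasure (m x) N \<partial>\<nu>)"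
        using NB sets_m by (intro nn_integral_mono mult_left_mono emeasure_mono) auto
      then show ?thesis using T by simp
    qed
    finally show ?thesis by simp
  qed
  show "emeasure \<nu> (- N \<inter> A) = (\<integral>\<^sup>+ x. indicator (- N) x * emeasure (m x) A \<partial>\<nu>)"
  proof -
    have NA: "N \<inter> A \<in> sets \<nu>" "- N \<inter> A \<in> sets \<nu>" using NB A s by (auto simp: sets.compl_sets sp)
    have eqA: "(N \<inter> A) \<union> (- N \<inter> A) = A" by auto
    have "emeasure \<nu> (N \<inter> A) + emeasure \<nu> (- N \<inter> A) = emeasure \<nu> ((N \<inter> A) \<union> (- N \<inter> A))"
      by (rule plus_emeasure[OF NA]) auto
    then have "emeasure \<nu> (N \<inter> A) + emeasure \<nu> (- N \<inter> A) = emeasure \<nu> A" by (simp only: eqA)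
    also have "\<dots> = (\<integral>\<^sup>+ x. emeasure (m x) A \<partial>\<nu>)" using inv A by blast
    also have "\<dots> = (\<integral>\<^sup>+ x. indicator N x * emeasure (m x) A + indicator (- N) x * emeasure (m x) A \<partial>\<nu>)"
      by (intro nn_integral_cong) (auto split: split_indicator)
    also have "\<dots> = (\<integral>\<^sup>+ x. indicator N x * emeasure (m x) A \<partial>\<nu>) + (\<integral>\<^sup>+ x. indicator (- N) x * emeasure (m x) A \<partial>\<nu>)"
      using iN iN' mx_meas[OF A] by (intro nn_integral_add borel_measurable_times_ennreal) auto
    also have "\<dots> = emeasure \<nu> (N \<inter> A) + (\<integral>\<^sup>+ x. indicator (- N) x * emeasure (m x) A \<partial>\<nu>)"
      using first by simp
    finally have E: "emeasure \<nu> (N \<inter> A) + emeasure \<nu> (- N \<inter> A) = emeasure \<nu> (N \<inter> A) + (\<integral>\<^sup>+ x. indicator (- N) x * emeasure (m x) A \<partial>\<nu>)" .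
    have "emeasure \<nu> (N \<inter> A) \<noteq> \<top>" using fin_set[of "N \<inter> A"] by simp
    with E show ?thesis unfolding ennreal_add_left_cancel infinity_ennreal_def by blast
  qed
qed

lemma mc: "m_connected m \<nu>"
  unfolding m_connected_def
proof (intro ballI impI)
  fix D assume D: "D \<in> sets borel" and Dp: "0 < emeasure \<nu> D \<and> emeasure \<nu> D < \<infinity>"
  define N where "N = N_set m D"
  have NB: "N \<in> sets borel"
  proof (cases "N = {}")
    case True then show ?thesis by simp
  next
    case False
    then obtain x where "x \<in> N" by blast
    then show ?thesis using Nset_closed(1)[OF D _ sets.top[of borel]] N_def by simp
  qed
  have NcB: "- N \<in> sets borel" using sets.compl_sets[OF NB] by (simp add: Compl_eq_Diff_UNIV)
  have cl: "\<And>x A. x \<in> N \<Longrightarrow> A \<in> sets borel \<Longrightarrow> emeasure (m x) (A \<inter> N) = emeasure (m x) A"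
    using Nset_closed(2)[OF D] N_def by blast
  have RI1: "emeasure \<nu> (N \<inter> A) = (\<integral>\<^sup>+ x. indicator N x * emeasure (m x) A \<partial>\<nu>)"
    if A: "A \<in> sets borel" for A
    by (rule restr_inv(1)[OF NB _ A]) (simp add: cl)
  have RI2: "emeasure \<nu> (- N \<inter> A) = (\<integral>\<^sup>+ x. indicator (- N) x * emeasure (m x) A \<partial>\<nu>)"
    if A: "A \<in> sets borel" for A
    by (rule restr_inv(2)[OF NB _ A]) (simp add: cl)
  have mD0: "emeasure (m x) D = 0" if "x \<in> N" for x
  proof -
    have "m_iter m x 1 = m x" using kernel by (simp add: bind_return)
    moreover have "emeasure (m_iter m x 1) D = 0" using that by (simp add: N_def N_set_def del: m_iter.simps)
    ultimately show ?thesis by simp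
  qed
  have Nc: "0 < emeasure \<nu> (- N)"
  proof (rule ccontr)
    assume "\<not> 0 < emeasure \<nu> (- N)"
    then have z: "emeasure \<nu> (- N) = 0" by (simp add: not_gr_zero)
    have "emeasure \<nu> (N \<inter> D) = (\<integral>\<^sup>+ x. indicator N x * emeasure (m x) D \<partial>\<nu>)" by (rule RI1[OF D])
    also have "\<dots> = (\<integral>\<^sup>+ x. 0 \<partial>\<nu>)"
      by (intro nn_integral_cong) (auto simp: mD0 split: split_indicator)
    finally have a: "emeasure \<nu> (N \<inter> D) = 0" by simp
    have b: "emeasure \<nu> (- N \<inter> D) = 0"
      using emeasure_mono[of "- N \<inter> D" "- N" \<nu>] z NcB s by simp
    have eqD: "(N \<inter> D) \<union> (- N \<inter> D) = D" by auto
    have "emeasure \<nu> (N \<inter> D) + emeasure \<nu> (- N \<inter> D) = emeasure \<nu> ((N \<inter> D) \<union> (- N \<inter> D))"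
      by (rule plus_emeasure) (use NB NcB D s in auto)
    then have "emeasure \<nu> D = 0" using a b by (simp only: eqD) simp
    then show False using Dp by simp
  qed
  show "emeasure \<nu> (N_set m D) = 0"
  proof (rule ccontr)
    assume "emeasure \<nu> (N_set m D) \<noteq> 0"
    then have Np: "0 < emeasure \<nu> N" by (simp add: N_def zero_less_iff_neq_zero)
    define \<mu>1 where "\<mu>1 = density \<nu> (indicator N)"
    define \<mu>2 where "\<mu>2 = density \<nu> (indicator (- N))"
    have s1: "sets \<mu>1 = sets borel" and s2: "sets \<mu>2 = sets borel" by (simp_all add: \<mu>1_def \<mu>2_def s)
    have sp1: "space \<mu>1 = UNIV" and sp2: "space \<mu>2 = UNIV"
      using sets_eq_imp_space_eq[OF s1] sets_eq_imp_space_eq[OF s2] by simp_all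
    have e1: "emeasure \<mu>1 A = emeasure \<nu> (N \<inter> A)" if "A \<in> sets borel" for A
      unfolding \<mu>1_def using that NB s by (intro emeasure_restricted) auto
    have e2: "emeasure \<mu>2 A = emeasure \<nu> (- N \<inter> A)" if "A \<in> sets borel" for A
      unfolding \<mu>2_def using that NcB s by (intro emeasure_restricted) auto
    have iN: "indicator N \<in> borel_measurable \<nu>" using NB s by simp
    have iN': "indicator (- N) \<in> borel_measurable \<nu>" using NcB s by simp
    have inv1: "\<forall>A\<in>sets borel. emeasure \<mu>1 A = (\<integral>\<^sup>+ x. emeasure (m x) A \<partial>\<mu>1)"
    proof
      fix A :: "'a set" assume A: "A \<in> sets borel"
      have "(\<integral>\<^sup>+ x. emeasure (m x) A \<partial>\<mu>1) = (\<integral>\<^sup>+ x. indicator N x * emeasure (m x) A \<partial>\<nu>)"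
        unfolding \<mu>1_def by (rule nn_integral_density[OF iN mx_meas[OF A]])
      then show "emeasure \<mu>1 A = (\<integral>\<^sup>+ x. emeasure (m x) A \<partial>\<mu>1)" using e1[OF A] RI1[OF A] by simp
    qed
    have inv2: "\<forall>A\<in>sets borel. emeasure \<mu>2 A = (\<integral>\<^sup>+ x. emeasure (m x) A \<partial>\<mu>2)"
    proof
      fix A :: "'a set" assume A: "A \<in> sets borel"
      have "(\<integral>\<^sup>+ x. emeasure (m x) A \<partial>\<mu>2) = (\<integral>\<^sup>+ x. indicator (- N) x * emeasure (m x) A \<partial>\<nu>)"
        unfolding \<mu>2_def by (rule nn_integral_density[OF iN' mx_meas[OF A]])
      then show "emeasure \<mu>2 A = (\<integral>\<^sup>+ x. emeasure (m x) A \<partial>\<mu>2)" using e2[OF A] RI2[OF A] by simp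
    qed
    have fin1: "emeasure \<mu>1 (space \<mu>1) < \<infinity>" using e1[of UNIV] sp1 fin_set by simp
    have fin2: "emeasure \<mu>2 (space \<mu>2) < \<infinity>" using e2[of UNIV] sp2 fin_set by simp
    have fm1: "finite_measure \<mu>1" using fin1 by (intro finite_measureI) simp
    have fm2: "finite_measure \<mu>2" using fin2 by (intro finite_measureI) simp
    have "emeasure \<nu> N = (SUP K \<in> {K. K \<subseteq> N \<and> compact K}. emeasure \<nu> K)"
      by (rule inner_regular[OF s _ NB]) (use fin in simp)
    with Np obtain K where K: "K \<subseteq> N" "compact K" and Kp: "0 < emeasure \<nu> K"
      by (auto simp: less_SUP_iff)
    have cK: "closed K" using K(2) by (rule compact_imp_closed)
    have KB: "K \<in> sets borel" using cK by simp
    have Kne: "K \<noteq> {}" using Kp by auto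
    define f where "f k x = max 0 (1 - real k * infdist x K)" for k x
    let ?a1 = "measure \<mu>1 (space \<mu>1)" and ?a2 = "measure \<mu>2 (space \<mu>2)"
    have eqk: "?a2 * (\<integral>x. f k x \<partial>\<mu>1) = ?a1 * (\<integral>x. f k x \<partial>\<mu>2)" for k
    proof -
      have L1: "(\<lambda>n. ?a1 * (\<integral>z. f k z \<partial>m_iter m undefined n)) \<longlonglongrightarrow> (\<integral>x. f k x \<partial>\<mu>1)"
        unfolding f_def by (rule conv[OF s1 inv1 fin1 fK_lip fK_bnd]) simp
      have L2: "(\<lambda>n. ?a2 * (\<integral>z. f k z \<partial>m_iter m undefined n)) \<longlonglongrightarrow> (\<integral>x. f k x \<partial>\<mu>2)"
        unfolding f_def by (rule conv[OF s2 inv2 fin2 fK_lip fK_bnd]) simp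
      have A: "(\<lambda>n. ?a2 * (?a1 * (\<integral>z. f k z \<partial>m_iter m undefined n))) \<longlonglongrightarrow> ?a2 * (\<integral>x. f k x \<partial>\<mu>1)"
        by (rule tendsto_mult_left[OF L1])
      have B: "(\<lambda>n. ?a1 * (?a2 * (\<integral>z. f k z \<partial>m_iter m undefined n))) \<longlonglongrightarrow> ?a1 * (\<integral>x. f k x \<partial>\<mu>2)"
        by (rule tendsto_mult_left[OF L2])
      have eqs: "(\<lambda>n. ?a1 * (?a2 * (\<integral>z. f k z \<partial>m_iter m undefined n))) = (\<lambda>n. ?a2 * (?a1 * (\<integral>z. f k z \<partial>m_iter m undefined n)))"
        by (rule ext) (rule mult.left_commute)
      from B have B': "(\<lambda>n. ?a2 * (?a1 * (\<integral>z. f k z \<partial>m_iter m undefined n))) \<longlonglongrightarrow> ?a1 * (\<integral>x. f k x \<partial>\<mu>2)"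
        by (simp only: eqs)
      show ?thesis by (rule LIMSEQ_unique[OF A B'])
    qed
    have M1: "(\<lambda>k. ?a2 * (\<integral>x. f k x \<partial>\<mu>1)) \<longlonglongrightarrow> ?a2 * measure \<mu>1 K"
      unfolding f_def by (intro tendsto_mult_left fK_lim[OF s1 fm1 cK Kne])
    have M2: "(\<lambda>k. ?a1 * (\<integral>x. f k x \<partial>\<mu>2)) \<longlonglongrightarrow> ?a1 * measure \<mu>2 K"
      unfolding f_def by (intro tendsto_mult_left fK_lim[OF s2 fm2 cK Kne])
    have eqf: "(\<lambda>k. ?a2 * (\<integral>x. f k x \<partial>\<mu>1)) = (\<lambda>k. ?a1 * (\<integral>x. f k x \<partial>\<mu>2))"
      by (rule ext) (rule eqk)
    from M1 have M1': "(\<lambda>k. ?a1 * (\<integral>x. f k x \<partial>\<mu>2)) \<longlonglongrightarrow> ?a2 * measure \<mu>1 K"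
      by (simp only: eqf)
    have "?a2 * measure \<mu>1 K = ?a1 * measure \<mu>2 K"
      by (rule LIMSEQ_unique[OF M1' M2])
    moreover have "measure \<mu>2 K = 0"
    proof -
      have "- N \<inter> K = {}" using K(1) by auto
      then show ?thesis using e2[OF KB] by (simp add: measure_def)
    qed
    moreover have "0 < measure \<mu>1 K"
    proof -
      have "N \<inter> K = K" using K(1) by auto
      then have "emeasure \<mu>1 K = emeasure \<nu> K" using e1[OF KB] by simp
      then show ?thesis using Kp fin_set[of K] by (simp add: measure_def enn2real_positive_iff)
    qed
    moreover have "0 < ?a2"
    proof -
      have "emeasure \<mu>2 (space \<mu>2) = emeasure \<nu> (- N)" using e2[of UNIV] sp2 by simp
      then show ?thesis using Nc fin_set[of "- N"] by (simp add: measure_def enn2real_positive_iff)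
    qed
    ultimately show False by simp
  qed
qed

end


lemma get_c:
  fixes m :: "'a::polish_space \<Rightarrow> 'a measure"
  assumes mrws: "metric_random_walk_space m" and pos: "ollivier_ricci m > 0"
  shows "\<exists>c. mrw m c"
proof -
  obtain k :: real where k0: "0 < k" and k1: "k \<le> 1" and kle: "ereal k \<le> ollivier_ricci m"
  proof (cases "ollivier_ricci m")
    case (real r)
    then show ?thesis using pos by (intro that[of "min r 1"]) auto
  next
    case PInf
    then show ?thesis by (intro that[of 1]) auto
  next
    case MInf
    then show ?thesis using pos by simp
  qed
  have Wb: "W1 (m x) (m y) \<le> ennreal ((1 - k) * dist x y)" if xy: "x \<noteq> y" for x y
  proof -
    have d0: "0 < dist x y" using xy by simp
    have "ereal k \<le> 1 - enn2ereal (W1 (m x) (m y)) / ereal (dist x y)"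
      using kle unfolding ollivier_ricci_def
      by (rule order_trans) (rule INF_lower2[of "(x, y)"], use xy in auto)
    moreover obtain w where w0: "0 \<le> w" and wW: "W1 (m x) (m y) = ennreal w \<or> W1 (m x) (m y) = \<top>"
      by (metis ennreal_cases order_refl)
    ultimately show ?thesis
    proof (elim disjE)
      assume A: "ereal k \<le> 1 - enn2ereal (W1 (m x) (m y)) / ereal (dist x y)"
        and B: "W1 (m x) (m y) = ennreal w"
      have "ereal k \<le> ereal (1 - w / dist x y)" using A B w0 d0 by (simp add: one_ereal_def)
      then have "k \<le> 1 - w / dist x y" by simp
      then have "w \<le> (1 - k) * dist x y" using d0 by (simp add: field_simps)
      then show ?thesis using B by (simp add: ennreal_leI)
    next
      assume A: "ereal k \<le> 1 - enn2ereal (W1 (m x) (m y)) / ereal (dist x y)"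
        and B: "W1 (m x) (m y) = \<top>"
      have "enn2ereal (W1 (m x) (m y)) / ereal (dist x y) = \<infinity>" using B d0 by simp
      then have "ereal k \<le> 1 - \<infinity>" using A by simp
      then show ?thesis by (simp add: one_ereal_def)
    qed
  qed
  have "mrw m (1 - k)"
  proof (rule mrw.intro)
    show "prob_space (m x)" for x using mrws unfolding metric_random_walk_space_def by blast
    show "sets (m x) = sets borel" for x using mrws unfolding metric_random_walk_space_def by blast
    show "(\<lambda>x. emeasure (m x) A) \<in> borel_measurable borel" if "A \<in> sets borel" for A
      using mrws that unfolding metric_random_walk_space_def by blast
    show "0 \<le> 1 - k" using k1 by simp
    show "1 - k < 1" using k0 by simp
    show "W1 (m x) (m y) \<le> ennreal ((1 - k) * dist x y)" if "x \<noteq> y" for x y using Wb that .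
  qed
  then show ?thesis by blast
qed

theorem theorem2p12:
  fixes m :: "'a::polish_space \<Rightarrow> 'a measure" and \<nu> :: "'a measure"
  assumes "metric_random_walk_space m"
    and "invariant_measure m \<nu>"
    and "emeasure \<nu> (space \<nu>) < \<infinity>"
    and "ollivier_ricci m > 0"
  shows "m_connected m \<nu> \<and> weakly_strong_m_connected m \<nu>"
proof -
  obtain c where c: "mrw m c" using get_c[OF assms(1,4)] by blast
  have s: "sets \<nu> = sets borel" and inv: "\<forall>A\<in>sets borel. emeasure \<nu> A = (\<integral>\<^sup>+ x. emeasure (m x) A \<partial>\<nu>)"
    using assms(2) unfolding invariant_measure_def by auto
  interpret mrw_nu m c \<nu>
    by (rule mrw_nu.intro[OF c]) (rule mrw_nu_axioms.intro[OF s inv assms(3)])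
  show ?thesis using mc ws[OF s inv assms(3)] by simp
qed

end
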